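(* Let $s$ be a positive integer, let $\lambda,\eta,n$ be numbers (e.g. reals), and put $c(x)=\lambda x+\eta$. Then $$\sum_{i=0}^{s-1}(-1)^i\binom{s-1}{i}c(n-i)^s+\sum_{i=s+1}^{2s}(-1)^{s+i}\binom{s-1}{2s-i}c(n-i)^s=\lambda^s(s+1)!.$$ *)

theory Defs
  imports Complex_Main
begin

end

theory Submission
  imports Defs
begin

lemma altG:
  fixes g :: "nat \<Rightarrow> real"
  shows "(\<Sum>k\<le>Suc m. (-1)^k * real (Suc m choose k) * g k)
       = (\<Sum>k\<le>m. (-1)^k * real (m choose k) * (g k - g (Suc k)))"
proof -
  have A: "(\<Sum>k\<le>Suc m. (-1)^k * real (Suc m choose k) * g k)
     = g 0 + (\<Sum>k\<le>m. (-1)^Suc k * real (m choose k) * g (Suc k))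
           + (\<Sum>k\<le>m. (-1)^Suc k * real (m choose Suc k) * g (Suc k))"
    by (simp only: sum.atMost_Suc_shift) (simp add: sum.distrib[symmetric] algebra_simps)
  have B: "(\<Sum>k\<le>m. (-1)^k * real (m choose k) * g k)
     = g 0 + (\<Sum>k\<le>m. (-1)^Suc k * real (m choose Suc k) * g (Suc k))"
  proof -
    have "(\<Sum>k\<le>Suc m. (-1)^k * real (m choose k) * g k) = (\<Sum>k\<le>m. (-1)^k * real (m choose k) * g k)"
      by (simp add: binomial_eq_0)
    moreover have "(\<Sum>k\<le>Suc m. (-1)^k * real (m choose k) * g k)
       = g 0 + (\<Sum>k\<le>m. (-1)^Suc k * real (m choose Suc k) * g (Suc k))"
      by (simp only: sum.atMost_Suc_shift) simp
    ultimately show ?thesis by (simp add: binomial_eq_0)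
  qed
  have C: "(\<Sum>k\<le>m. (-1)^k * real (m choose k) * (g k - g (Suc k)))
     = (\<Sum>k\<le>m. (-1)^k * real (m choose k) * g k) + (\<Sum>k\<le>m. (-1)^Suc k * real (m choose k) * g (Suc k))"
    by (simp add: right_diff_distrib sum_subtractf sum_negf)
  show ?thesis using A B C by simp
qed

lemma moment:
  "j \<le> s \<Longrightarrow> (\<Sum>k\<le>s. (-1)^k * real (s choose k) * real k ^ j)
     = (if j < s then 0 else (-1)^s * fact s)"
proof (induction s arbitrary: j)
  case 0
  then show ?case by simp
next
  case (Suc s)
  have "(\<Sum>k\<le>Suc s. (-1)^k * real (Suc s choose k) * real k ^ j)
      = (\<Sum>k\<le>s. (-1)^k * real (s choose k) * (real k ^ j - real (Suc k) ^ j))"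
    by (rule altG)
  also have "\<dots> = (\<Sum>k\<le>s. (-1)^k * real (s choose k) * (- (\<Sum>t<j. real (j choose t) * real k ^ t)))"
  proof (rule sum.cong[OF refl])
    fix k
    have "real (Suc k) ^ j = (\<Sum>t\<le>j. real (j choose t) * real k ^ t)"
      using binomial_ring[of "real k" 1 j] by (simp add: add.commute)
    also have "\<dots> = (\<Sum>t<j. real (j choose t) * real k ^ t) + real k ^ j"
      by (simp add: lessThan_Suc_atMost[symmetric])
    finally show "(-1)^k * real (s choose k) * (real k ^ j - real (Suc k) ^ j)
        = (-1)^k * real (s choose k) * (- (\<Sum>t<j. real (j choose t) * real k ^ t))" by simp
  qed
  also have "\<dots> = - (\<Sum>t<j. real (j choose t) * (\<Sum>k\<le>s. (-1)^k * real (s choose k) * real k ^ t))"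
    by (simp add: sum_distrib_left sum_negf algebra_simps sum.swap[of _ "{..<j}"])
  also have "\<dots> = - (\<Sum>t<j. real (j choose t) * (if t < s then 0 else (-1)^s * fact s))"
    using Suc by (intro arg_cong[where f=uminus] sum.cong) auto
  also have "\<dots> = (if j < Suc s then 0 else (-1)^Suc s * fact (Suc s))"
  proof (cases "j = Suc s")
    case True
    have "(\<Sum>t<j. real (j choose t) * (if t < s then 0 else (-1)^s * fact s))
        = (\<Sum>t\<in>{s}. real (j choose t) * (if t < s then 0 else (-1)^s * fact s))"
      by (rule sum.mono_neutral_right) (use True in auto)
    then show ?thesis using True by (simp add: algebra_simps)
  next
    case False
    then have "j \<le> s" using Suc by simp
    then show ?thesis by (intro trans[OF _ sym[OF if_P]]) (auto intro!: sum.neutral)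
  qed
  finally show ?case .
qed

lemma diffpow:
  fixes lambda A :: real
  shows "(\<Sum>k\<le>s. (-1)^k * real (s choose k) * (A + (-lambda) * real k) ^ s) = lambda ^ s * fact s"
proof -
  have br: "\<And>x::real. (A + x)^s = (\<Sum>j\<le>s. real (s choose j) * x^j * A^(s-j))"
    using binomial_ring[of _ A s] by (simp add: add.commute)
  have "(\<Sum>k\<le>s. (-1)^k * real (s choose k) * (A + (-lambda) * real k) ^ s)
      = (\<Sum>k\<le>s. (-1)^k * real (s choose k) * (\<Sum>j\<le>s. real (s choose j) * ((-lambda) * real k)^j * A^(s-j)))"
    by (simp only: br)
  also have "\<dots> = (\<Sum>j\<le>s. real (s choose j) * (-lambda)^j * A^(s-j) * (\<Sum>k\<le>s. (-1)^k * real (s choose k) * real k ^ j))"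
    unfolding sum_distrib_left
    by (subst sum.swap) (intro sum.cong refl, simp add: power_mult_distrib mult_ac, metis mult_minus_left power_mult_distrib)
  also have "\<dots> = (\<Sum>j\<le>s. real (s choose j) * (-lambda)^j * A^(s-j) * (if j < s then 0 else (-1)^s * fact s))"
    by (intro sum.cong refl) (simp add: moment)
  also have "\<dots> = (\<Sum>j\<in>{s}. real (s choose j) * (-lambda)^j * A^(s-j) * (if j < s then 0 else (-1)^s * fact s))"
    by (rule sum.mono_neutral_right) auto
  also have "\<dots> = lambda ^ s * fact s"
    by (simp add: power_mult_distrib[symmetric])
  finally show ?thesis .
qed

theorem proposition9:
  fixes s :: nat and lambda eta n :: real and c :: "real \<Rightarrow> real"
  assumes "s \<ge> 1"
    and "\<And>x. c x = lambda * x + eta"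
  shows "(\<Sum>i=0..s-1. (-1)^i * real ((s-1) choose i) * c (n - real i) ^ s)
       + (\<Sum>i=s+1..2*s. (-1)^(s+i) * real ((s-1) choose (2*s-i)) * c (n - real i) ^ s)
       = lambda ^ s * fact (s+1)"
proof -
  obtain m where sm: "s = Suc m" using assms(1) by (cases s) auto
  define F where "F r = (\<Sum>k\<le>m. (-1)^k * real (m choose k) * c (n - real r - real k) ^ s)" for r :: nat
  have ivl: "{s+1..2*s} = {0+(s+1)..m+(s+1)}" using sm by simp
  have 1: "(\<Sum>i=0..s-1. (-1)^i * real ((s-1) choose i) * c (n - real i) ^ s) = F 0"
    unfolding F_def sm by (simp add: atLeast0AtMost)
  have "(\<Sum>i=s+1..2*s. (-1)^(s+i) * real ((s-1) choose (2*s-i)) * c (n - real i) ^ s)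
      = (\<Sum>k=0+(s+1)..m+(s+1). (-1)^(s+k) * real ((s-1) choose (2*s-k)) * c (n - real k) ^ s)"
    by (subst ivl) (rule refl)
  also have "\<dots> = (\<Sum>k=0..m. (-1)^(s+(k+(s+1))) * real ((s-1) choose (2*s-(k+(s+1)))) * c (n - real (k+(s+1))) ^ s)"
    by (rule sum.shift_bounds_cl_nat_ivl)
  also have "\<dots> = - F (s+1)"
    unfolding F_def sum_negf[symmetric] atLeast0AtMost
  proof (intro sum.cong refl)
    fix k assume "k \<in> {..m}"
    then have km: "k \<le> m" by simp
    have e1: "2*s-(k+(s+1)) = m - k" using sm by simp
    have e2: "(-1::real)^(s+(k+(s+1))) = - ((-1)^k)"
    proof -
      have "s+(k+(s+1)) = 2*s + 1 + k" by simp
      then show ?thesis by (simp add: power_add)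
    qed
    have e3: "n - real (k+(s+1)) = n - real (s+1) - real k" by simp
    show "(-1)^(s+(k+(s+1))) * real ((s-1) choose (2*s-(k+(s+1)))) * c (n - real (k+(s+1))) ^ s
        = - ((-1)^k * real (m choose k) * c (n - real (s+1) - real k) ^ s)"
      unfolding e1 e2 e3 using km sm by (simp add: binomial_symmetric[symmetric])
  qed
  finally have 2: "(\<Sum>i=s+1..2*s. (-1)^(s+i) * real ((s-1) choose (2*s-i)) * c (n - real i) ^ s) = - F (s+1)" .
  have 3: "F r - F (Suc r) = lambda ^ s * fact s" for r
  proof -
    have "F r - F (Suc r) = (\<Sum>k\<le>m. (-1)^k * real (m choose k) * (c (n - real r - real k) ^ s - c (n - real r - real (Suc k)) ^ s))"
      unfolding F_def by (simp add: sum_subtractf right_diff_distrib algebra_simps)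
    also have "\<dots> = (\<Sum>k\<le>s. (-1)^k * real (s choose k) * c (n - real r - real k) ^ s)"
      unfolding sm by (rule altG[symmetric])
    also have "\<dots> = (\<Sum>k\<le>s. (-1)^k * real (s choose k) * ((lambda * (n - real r) + eta) + (-lambda) * real k) ^ s)"
      by (intro sum.cong refl) (simp add: assms(2) algebra_simps)
    also have "\<dots> = lambda ^ s * fact s" by (rule diffpow)
    finally show ?thesis .
  qed
  have "F 0 - F (s+1) = (\<Sum>r<s+1. F r - F (Suc r))"
    using sum_lessThan_telescope'[of F "s+1"] by simp
  also have "\<dots> = (s+1) * (lambda ^ s * fact s)" using 3 by simp
  finally show ?thesis using 1 2 by (simp add: algebra_simps)
qed

end
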